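(* Let $t$ be a closed $\lambda$-term. If there are a value $v$ and a reduction sequence $t\to_{\beta_v}^* v$, then there is a derivation of $\vdash t:\mathtt{n}$ (empty type context) in the silly multi type system.
   Context: $\lambda$-terms $t ::= x\mid\lambda x.t\mid tu$; values are abstractions. CbV contexts $V ::= \langle\cdot\rangle\mid tV\mid Vt$; root rule $(\lambda x.t)v\mapsto_{\beta_v} t\{x:=v\}$ for $v$ a value; $\to_{\beta_v}$ is its closure under CbV contexts. Silly multi types: linear types $L ::= \mathtt{n} \mid M\multimap L$; multi types $M ::= [L_i]_{i\in I}$ finite multisets ($\mathbf{0}$ empty, $\uplus$ sum). Type contexts $\Gamma$ map variables to multi types with finite support; $\uplus$ pointwise; $\Gamma\setminus\!\!\setminus x$ sets $x$ to $\mathbf{0}$. Judgements $\Gamma\vdash^{(m,e)} t:T$, written $\Gamma\vdash t:T$ when indices are irrelevant. Rules: (ax) $x:[L]\vdash^{(0,1)} x:L$; (many) from $(\Gamma_i\vdash^{(m_i,e_i)} t : L_i)_{i\in I}$, $I$ finite possibly empty, infer $\uplus_i\Gamma_i\vdash^{(\sum m_i,\sum e_i)} t : [L_i]_{i\in I}$; ($\mathrm{ax}_\lambda$) $\vdash^{(0,0)}\lambda x.t:\mathtt{n}$; ($\lambda$) from $\Gamma\vdash^{(m,e)}t:L$ infer $\Gamma\setminus\!\!\setminus x\vdash^{(m,e)}\lambda x.t:\Gamma(x)\multimap L$; (@) from $\Gamma\vdash^{(m,e)} t : M\multimap L$ and $\Delta\vdash^{(m',e')} u : M\uplus[\mathtt{n}]$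 infer $\Gamma\uplus\Delta\vdash^{(m+m'+1,e+e')} tu : L$. *)

theory Defs
  imports Main "HOL-Library.Multiset"
begin

datatype trm = Var nat | Lam trm | App trm trm

definition is_value :: "trm \<Rightarrow> bool" where
  "is_value t \<longleftrightarrow> (\<exists>b. t = Lam b)"

fun fvs :: "nat \<Rightarrow> trm \<Rightarrow> nat set" where
  "fvs k (Var i) = (if i < k then {} else {i - k})"
| "fvs k (Lam t) = fvs (Suc k) t"
| "fvs k (App t u) = fvs k t \<union> fvs k u"

definition closed :: "trm \<Rightarrow> bool" where
  "closed t \<longleftrightarrow> fvs 0 t = {}"

fun lift :: "nat \<Rightarrow> trm \<Rightarrow> trm" where
  "lift k (Var i) = (if i < k then Var i else Var (Suc i))"
| "lift k (Lam t) = Lam (lift (Suc k) t)"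
| "lift k (App t u) = App (lift k t) (lift k u)"

fun subst :: "trm \<Rightarrow> nat \<Rightarrow> trm \<Rightarrow> trm" where
  "subst (Var i) k s = (if i < k then Var i else if i = k then s else Var (i - 1))"
| "subst (Lam t) k s = Lam (subst t (Suc k) (lift 0 s))"
| "subst (App t u) k s = App (subst t k s) (subst u k s)"

inductive beta_v :: "trm \<Rightarrow> trm \<Rightarrow> bool" where
  root: "is_value v \<Longrightarrow> beta_v (App (Lam t) v) (subst t 0 v)"
| appR: "beta_v u u' \<Longrightarrow> beta_v (App t u) (App t u')"
| appL: "beta_v t t' \<Longrightarrow> beta_v (App t u) (App t' u)"

abbreviation beta_v_star :: "trm \<Rightarrow> trm \<Rightarrow> bool" where
  "beta_v_star \<equiv> beta_v\<^sup>*\<^sup>*"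

datatype lty = Nt | Arr "lty multiset" lty

type_synonym mty = "lty multiset"
type_synonym ctx = "nat \<Rightarrow> mty"

definition empty_ctx :: ctx where
  "empty_ctx = (\<lambda>_. {#})"

definition ctx_plus :: "ctx \<Rightarrow> ctx \<Rightarrow> ctx" where
  "ctx_plus \<Gamma> \<Delta> = (\<lambda>x. \<Gamma> x + \<Delta> x)"

text \<open>In the abstraction rule, variable 0 is bound and the remaining context is shifted down.
  The (many) rule takes a finite (possibly empty) family, represented as a list.\<close>
inductive typ_l :: "ctx \<Rightarrow> trm \<Rightarrow> lty \<Rightarrow> nat \<Rightarrow> nat \<Rightarrow> bool"
  and typ_m :: "ctx \<Rightarrow> trm \<Rightarrow> mty \<Rightarrow> nat \<Rightarrow> nat \<Rightarrow> bool" where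
  ax: "typ_l (\<lambda>y. if y = x then {#L#} else {#}) (Var x) L 0 1"
| many: "(\<forall>d \<in> set ds. typ_l (fst d) t (fst (snd d)) (fst (snd (snd d))) (snd (snd (snd d))))
         \<Longrightarrow> typ_m (\<lambda>y. sum_list (map (\<lambda>d. fst d y) ds)) t
                   (mset (map (\<lambda>d. fst (snd d)) ds))
                   (sum_list (map (\<lambda>d. fst (snd (snd d))) ds))
                   (sum_list (map (\<lambda>d. snd (snd (snd d))) ds))"
| ax_lam: "typ_l empty_ctx (Lam t) Nt 0 0"
| lam: "typ_l \<Gamma> t L m e \<Longrightarrow> typ_l (\<lambda>y. \<Gamma> (Suc y)) (Lam t) (Arr (\<Gamma> 0) L) m e"
| app: "typ_l \<Gamma> t (Arr M L) m e \<Longrightarrow> typ_m \<Delta> u (M + {#Nt#}) m' e'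
        \<Longrightarrow> typ_l (ctx_plus \<Gamma> \<Delta>) (App t u) L (m + m' + 1) (e + e')"

end

theory Submission
  imports Defs
begin

definition TL :: "ctx \<Rightarrow> trm \<Rightarrow> lty \<Rightarrow> bool" where
  "TL G t L \<longleftrightarrow> (\<exists>m e. typ_l G t L m e)"

inductive TM :: "ctx \<Rightarrow> trm \<Rightarrow> mty \<Rightarrow> bool" where
  tm0: "TM empty_ctx t {#}"
| tmS: "TM G t M \<Longrightarrow> TL G2 t L \<Longrightarrow> TM (ctx_plus G G2) t (add_mset L M)"

definition del :: "nat \<Rightarrow> ctx \<Rightarrow> ctx" where
  "del k G = (\<lambda>y. if y < k then G y else G (Suc y))"

lemma ctx_plus_empty[simp]: "ctx_plus G empty_ctx = G" "ctx_plus empty_ctx G = G"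
  by (auto simp: ctx_plus_def empty_ctx_def)

lemma ctx_plus_app: "ctx_plus G D y = G y + D y"
  by (simp add: ctx_plus_def)

lemma empty_ctx_app: "empty_ctx y = {#}"
  by (simp add: empty_ctx_def)

lemma del_plus[simp]: "del k (ctx_plus G D) = ctx_plus (del k G) (del k D)"
  by (auto simp: del_def ctx_plus_def)

lemma del_empty[simp]: "del k empty_ctx = empty_ctx"
  by (auto simp: del_def empty_ctx_def)

lemma ctx_plus_assoc: "ctx_plus (ctx_plus a b) c = ctx_plus a (ctx_plus b c)"
  by (auto simp: ctx_plus_def add_ac)

lemma ctx_plus_comm: "ctx_plus a b = ctx_plus b a"
  by (auto simp: ctx_plus_def add_ac)

lemma ctx_plus_4: "ctx_plus (ctx_plus a b) (ctx_plus c d) = ctx_plus (ctx_plus a c) (ctx_plus b d)"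
  by (auto simp: ctx_plus_def add_ac)

lemma list_TM:
  "(\<forall>d \<in> set ds. typ_l (fst d) t (fst (snd d)) (fst (snd (snd d))) (snd (snd (snd d))))
   \<Longrightarrow> TM (\<lambda>y. sum_list (map (\<lambda>d. fst d y) ds)) t (mset (map (\<lambda>d. fst (snd d)) ds))"
proof (induction ds)
  case Nil
  then show ?case using tm0[of t] by (simp add: empty_ctx_def)
next
  case (Cons d ds)
  then have "TM (\<lambda>y. sum_list (map (\<lambda>d. fst d y) ds)) t (mset (map (\<lambda>d. fst (snd d)) ds))"
    by auto
  moreover have "TL (fst d) t (fst (snd d))" using Cons.prems by (auto simp: TL_def)
  ultimately have "TM (ctx_plus (\<lambda>y. sum_list (map (\<lambda>d. fst d y) ds)) (fst d)) t
     (add_mset (fst (snd d)) (mset (map (\<lambda>d. fst (snd d)) ds)))" by (rule tmS)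
  moreover have "ctx_plus (\<lambda>y. sum_list (map (\<lambda>d. fst d y) ds)) (fst d)
     = (\<lambda>y. sum_list (map (\<lambda>d. fst d y) (d # ds)))"
    by (auto simp: ctx_plus_def add_ac)
  ultimately show ?case by simp
qed

inductive_cases typm_inv: "typ_m G t M m e"

lemma typm_TM: "typ_m G t M m e \<Longrightarrow> TM G t M"
  by (erule typm_inv) (simp add: list_TM[simplified])

lemma TM_typm: "TM G t M \<Longrightarrow> \<exists>m e. typ_m G t M m e"
proof (induction rule: TM.induct)
  case (tm0 t)
  have "typ_m (\<lambda>y. sum_list (map (\<lambda>d. fst d y) ([]::(ctx \<times> lty \<times> nat \<times> nat) list))) t
     (mset (map (\<lambda>d. fst (snd d)) ([]::(ctx \<times> lty \<times> nat \<times> nat) list)))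
     (sum_list (map (\<lambda>d. fst (snd (snd d))) ([]::(ctx \<times> lty \<times> nat \<times> nat) list)))
     (sum_list (map (\<lambda>d. snd (snd (snd d))) ([]::(ctx \<times> lty \<times> nat \<times> nat) list)))"
    by (rule many) simp
  then show ?case by (auto simp: empty_ctx_def)
next
  case (tmS G t M G2 L)
  then obtain m e where "typ_m G t M m e" by auto
  then obtain ds where ds: "G = (\<lambda>y. sum_list (map (\<lambda>d. fst d y) ds))"
     "M = mset (map (\<lambda>d. fst (snd d)) ds)"
     "\<forall>d \<in> set ds. typ_l (fst d) t (fst (snd d)) (fst (snd (snd d))) (snd (snd (snd d)))"
    by (rule typm_inv) auto
  obtain m2 e2 where h: "typ_l G2 t L m2 e2" using tmS by (auto simp: TL_def)
  let ?ds = "(G2, L, m2, e2) # ds"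
  have "typ_m (\<lambda>y. sum_list (map (\<lambda>d. fst d y) ?ds)) t
     (mset (map (\<lambda>d. fst (snd d)) ?ds))
     (sum_list (map (\<lambda>d. fst (snd (snd d))) ?ds))
     (sum_list (map (\<lambda>d. snd (snd (snd d))) ?ds))"
    by (rule many) (use ds h in auto)
  moreover have "(\<lambda>y. sum_list (map (\<lambda>d. fst d y) ?ds)) = ctx_plus G G2"
    using ds by (auto simp: ctx_plus_def add_ac)
  moreover have "mset (map (\<lambda>d. fst (snd d)) ?ds) = add_mset L M" using ds by simp
  ultimately show ?case by metis
qed

lemma TM_iff: "TM G t M \<longleftrightarrow> (\<exists>m e. typ_m G t M m e)"
  using TM_typm typm_TM by blast

lemma TL_ax: "G = (\<lambda>y. if y = x then {#L#} else {#}) \<Longrightarrow> TL G (Var x) L"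
  using ax by (auto simp: TL_def)

lemma TL_lamNt: "TL empty_ctx (Lam t) Nt"
  using ax_lam by (auto simp: TL_def)

lemma TL_lam: "TL G t L \<Longrightarrow> G' = (\<lambda>y. G (Suc y)) \<Longrightarrow> M = G 0 \<Longrightarrow> TL G' (Lam t) (Arr M L)"
  unfolding TL_def using lam by blast

lemma TL_app: "TL G t (Arr M L) \<Longrightarrow> TM D u M' \<Longrightarrow> M' = M + {#Nt#} \<Longrightarrow> G' = ctx_plus G D
  \<Longrightarrow> TL G' (App t u) L"
  using app by (auto simp: TL_def TM_iff) blast

inductive_cases typl_var: "typ_l G (Var x) L m e"
inductive_cases typl_lam: "typ_l G (Lam t) L m e"
inductive_cases typl_app: "typ_l G (App t u) L m e"

lemma TL_Var: "TL G (Var x) L \<Longrightarrow> G = (\<lambda>y. if y = x then {#L#} else {#})"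
  by (auto simp: TL_def elim: typl_var)

lemma TL_Lam: "TL G (Lam t) L \<Longrightarrow> (G = empty_ctx \<and> L = Nt) \<or>
   (\<exists>G0 L0. TL G0 t L0 \<and> G = (\<lambda>y. G0 (Suc y)) \<and> L = Arr (G0 0) L0)"
  by (auto simp: TL_def elim!: typl_lam)

lemma TL_App: "TL G (App t u) L \<Longrightarrow>
   \<exists>G1 D M. TL G1 t (Arr M L) \<and> TM D u (M + {#Nt#}) \<and> G = ctx_plus G1 D"
  unfolding TL_def TM_iff by (erule exE)+ (erule typl_app, simp, blast)

lemma TM_add: "TM G2 t M2 \<Longrightarrow> TM G1 t M1 \<Longrightarrow> TM (ctx_plus G1 G2) t (M1 + M2)"
proof (induction rule: TM.induct)
  case (tm0 t)
  then show ?case by simp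
next
  case (tmS G t M G3 L)
  then have "TM (ctx_plus (ctx_plus G1 G) G3) t (add_mset L (M1 + M))"
    using TM.tmS by blast
  then show ?case by (simp add: ctx_plus_assoc)
qed

lemma TM_single: "TL G t L \<Longrightarrow> TM G t {#L#}"
  by (drule tmS[OF tm0]) simp

lemma TM_lift_gen:
  assumes "\<And>G L. TL G (lift k s) L \<Longrightarrow> G k = {#} \<and> TL (del k G) s L"
  shows "TM G u M \<Longrightarrow> u = lift k s \<Longrightarrow> G k = {#} \<and> TM (del k G) s M"
proof (induction rule: TM.induct)
  case (tm0 t)
  then show ?case using TM.tm0[of s] by (simp add: empty_ctx_def del_def)
next
  case (tmS G t M G2 L)
  then have a: "G k = {#}" "TM (del k G) s M" "G2 k = {#}" "TL (del k G2) s L"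
    using assms[of G2 L] by auto
  then show ?case using TM.tmS[OF a(2) a(4)] by (simp add: ctx_plus_app[of G G2 k])
qed

lemma TL_lift: "TL G (lift k s) L \<Longrightarrow> G k = {#} \<and> TL (del k G) s L"
proof (induction s arbitrary: k G L)
  case (Var i)
  show ?case
  proof (cases "i < k")
    case True
    then show ?thesis using Var TL_Var[of G i L]
      by (auto intro!: TL_ax simp: del_def)
  next
    case False
    then have "G = (\<lambda>y. if y = Suc i then {#L#} else {#})" using Var TL_Var by auto
    then show ?thesis using False
      by (auto intro!: TL_ax simp: del_def)
  qed
next
  case (Lam b)
  from TL_Lam[of G "lift (Suc k) b" L] Lam.prems
  consider "G = empty_ctx" "L = Nt" | G0 L0 where "TL G0 (lift (Suc k) b) L0"
     "G = (\<lambda>y. G0 (Suc y))" "L = Arr (G0 0) L0" by auto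
  then show ?case
  proof cases
    case 1
    then show ?thesis using TL_lamNt[of b] by (simp add: empty_ctx_def del_def)
  next
    case 2
    with Lam.IH[OF 2(1)] have h: "G0 (Suc k) = {#}" "TL (del (Suc k) G0) b L0" by auto
    have "TL (del k G) (Lam b) (Arr (del (Suc k) G0 0) L0)"
      by (rule TL_lam[OF h(2)]) (auto simp: 2 del_def)
    then show ?thesis using 2 h by (simp add: del_def)
  qed
next
  case (App s1 s2)
  obtain G1 D M where h: "TL G1 (lift k s1) (Arr M L)" "TM D (lift k s2) (M + {#Nt#})"
    "G = ctx_plus G1 D" using TL_App[OF App.prems[simplified]] by blast
  have a: "G1 k = {#}" "TL (del k G1) s1 (Arr M L)" using App.IH(1)[OF h(1)] by auto
  have b: "D k = {#}" "TM (del k D) s2 (M + {#Nt#})"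
    using TM_lift_gen[OF App.IH(2) h(2)] by auto
  show ?case using a b h by (auto intro: TL_app simp: ctx_plus_app[of G1 D k])
qed

lemma TM_lift: "TM G (lift k s) M \<Longrightarrow> G k = {#} \<and> TM (del k G) s M"
  using TM_lift_gen[OF TL_lift] by blast

lemma TM_subst_gen:
  assumes "\<And>G L. TL G (subst t k s) L \<Longrightarrow>
     \<exists>G' D. TL G' t L \<and> TM D s (G' k) \<and> G = ctx_plus (del k G') D"
  shows "TM G u M \<Longrightarrow> u = subst t k s \<Longrightarrow>
     \<exists>G' D. TM G' t M \<and> TM D s (G' k) \<and> G = ctx_plus (del k G') D"
proof (induction rule: TM.induct)
  case (tm0 u)
  then show ?case by (intro exI[of _ empty_ctx]) (use TM.tm0[of t] TM.tm0[of s] in \<open>auto simp: empty_ctx_def del_def ctx_plus_def\<close>)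
next
  case (tmS G u M G2 L)
  then obtain G1' D1 where h1: "TM G1' t M" "TM D1 s (G1' k)" "G = ctx_plus (del k G1') D1"
    by auto
  from tmS assms obtain G2' D2 where h2: "TL G2' t L" "TM D2 s (G2' k)" "G2 = ctx_plus (del k G2') D2"
    by blast
  have "TM (ctx_plus G1' G2') t (add_mset L M)" using h1 h2 TM.tmS by blast
  moreover have "TM (ctx_plus D1 D2) s (ctx_plus G1' G2' k)" using TM_add[OF h2(2) h1(2)] by (simp add: ctx_plus_def del_def)
  moreover have "ctx_plus G G2 = ctx_plus (del k (ctx_plus G1' G2')) (ctx_plus D1 D2)"
    using h1 h2 by (simp add: ctx_plus_4)
  ultimately show ?case by blast
qed

lemma TL_subst: "TL G (subst t k s) L \<Longrightarrow>
     \<exists>G' D. TL G' t L \<and> TM D s (G' k) \<and> G = ctx_plus (del k G') D"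
proof (induction t arbitrary: k s G L)
  case (Var i)
  consider "i < k" | "i = k" | "i > k" by linarith
  then show ?case
  proof cases
    case 1
    then have "G = (\<lambda>y. if y = i then {#L#} else {#})" using Var TL_Var by auto
    then show ?thesis using 1
      by (intro exI[of _ G] exI[of _ empty_ctx]) (auto intro!: TL_ax TM.tm0 simp: del_def)
  next
    case 2
    then have "TL G s L" using Var by simp
    then show ?thesis using 2
      by (intro exI[of _ "\<lambda>y. if y = i then {#L#} else {#}"] exI[of _ G])
        (auto intro!: TL_ax TM_single simp: del_def ctx_plus_def)
  next
    case 3
    then have "G = (\<lambda>y. if y = i - 1 then {#L#} else {#})" using Var TL_Var by auto
    then show ?thesis using 3
      by (intro exI[of _ "\<lambda>y. if y = i then {#L#} else {#}"] exI[of _ empty_ctx])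
        (auto intro!: TL_ax TM.tm0 simp: del_def fun_eq_iff)
  qed
next
  case (Lam b)
  from TL_Lam[of G "subst b (Suc k) (lift 0 s)" L] Lam.prems
  consider "G = empty_ctx" "L = Nt" | G0 L0 where "TL G0 (subst b (Suc k) (lift 0 s)) L0"
     "G = (\<lambda>y. G0 (Suc y))" "L = Arr (G0 0) L0" by auto
  then show ?case
  proof cases
    case 1
    then show ?thesis
      by (intro exI[of _ empty_ctx] exI[of _ empty_ctx]) (use TL_lamNt[of b] TM.tm0[of s] in \<open>auto simp: empty_ctx_def del_def ctx_plus_def\<close>)
  next
    case 2
    with Lam.IH obtain G1 D1 where h: "TL G1 b L0" "TM D1 (lift 0 s) (G1 (Suc k))"
      "G0 = ctx_plus (del (Suc k) G1) D1" by blast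
    from TM_lift[OF h(2)] have l: "D1 0 = {#}" "TM (del 0 D1) s (G1 (Suc k))" by auto
    have "TL (\<lambda>y. G1 (Suc y)) (Lam b) (Arr (G1 0) L0)" by (rule TL_lam[OF h(1)]) auto
    moreover have "L = Arr (G1 0) L0" using 2 h l by (simp add: del_def ctx_plus_def)
    moreover have "G = ctx_plus (del k (\<lambda>y. G1 (Suc y))) (del 0 D1)"
      using 2 h by (auto simp: del_def ctx_plus_def fun_eq_iff)
    ultimately show ?thesis using l(2) by (intro exI[of _ "\<lambda>y. G1 (Suc y)"] exI[of _ "del 0 D1"]) auto
  qed
next
  case (App t1 t2)
  obtain G1 D M where h: "TL G1 (subst t1 k s) (Arr M L)" "TM D (subst t2 k s) (M + {#Nt#})"
    "G = ctx_plus G1 D" using TL_App[OF App.prems[simplified]] by blast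
  obtain G1' D1 where a: "TL G1' t1 (Arr M L)" "TM D1 s (G1' k)" "G1 = ctx_plus (del k G1') D1"
    using App.IH(1)[OF h(1)] by blast
  obtain G2' D2 where b: "TM G2' t2 (M + {#Nt#})" "TM D2 s (G2' k)" "D = ctx_plus (del k G2') D2"
    using TM_subst_gen[OF App.IH(2) h(2)] by blast
  have "TL (ctx_plus G1' G2') (App t1 t2) L" using a b by (auto intro: TL_app)
  moreover have "TM (ctx_plus D1 D2) s (ctx_plus G1' G2' k)" using TM_add[OF b(2) a(2)] by (simp add: ctx_plus_def del_def)
  moreover have "G = ctx_plus (del k (ctx_plus G1' G2')) (ctx_plus D1 D2)"
    using h a b by (simp add: ctx_plus_4)
  ultimately show ?case by blast
qed

lemma TM_exp_gen:
  assumes "\<And>G L. TL G u' L \<Longrightarrow> TL G u L"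
  shows "TM G v M \<Longrightarrow> v = u' \<Longrightarrow> TM G u M"
proof (induction rule: TM.induct)
  case (tm0 t)
  show ?case by (rule TM.tm0)
next
  case (tmS G t M G2 L)
  then show ?case using assms TM.tmS by blast
qed

lemma TL_exp: "beta_v t t' \<Longrightarrow> TL G t' L \<Longrightarrow> TL G t L"
proof (induction arbitrary: G L rule: beta_v.induct)
  case (root v b)
  then obtain G' D where h: "TL G' b L" "TM D v (G' 0)" "G = ctx_plus (del 0 G') D"
    using TL_subst by blast
  have l: "TL (\<lambda>y. G' (Suc y)) (Lam b) (Arr (G' 0) L)" by (rule TL_lam[OF h(1)]) auto
  have "TL empty_ctx v Nt" using root(1) TL_lamNt by (auto simp: is_value_def)
  then have m: "TM (ctx_plus D empty_ctx) v (add_mset Nt (G' 0))" using h(2) TM.tmS by blast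
  show ?case
    by (rule TL_app[OF l m]) (use h in \<open>auto simp: del_def\<close>)
next
  case (appR u u' t)
  obtain G1 D M where h: "TL G1 t (Arr M L)" "TM D u' (M + {#Nt#})"
    "G = ctx_plus G1 D" using TL_App[OF appR.prems] by blast
  have "TM D u (M + {#Nt#})" using TM_exp_gen[OF appR.IH h(2)] by blast
  then show ?case by (rule TL_app[OF h(1)]) (simp_all add: h(3))
next
  case (appL t t' u)
  obtain G1 D M where h: "TL G1 t' (Arr M L)" "TM D u (M + {#Nt#})"
    "G = ctx_plus G1 D" using TL_App[OF appL.prems] by blast
  show ?case by (rule TL_app[OF appL.IH[OF h(1)] h(2)]) (simp_all add: h(3))
qed

theorem theorem7p4:
  assumes "closed t"
    and "is_value v"
    and "beta_v_star t v"
  shows "\<exists>m e. typ_l empty_ctx t Nt m e"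
proof -
  have "TL empty_ctx t Nt"
    using assms(3)
  proof (induction rule: converse_rtranclp_induct)
    case base
    then show ?case using assms(2) TL_lamNt by (auto simp: is_value_def)
  next
    case (step y z)
    then show ?case using TL_exp by blast
  qed
  then show ?thesis by (simp add: TL_def)
qed

end
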